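(* Let $G$ be the graph defined in the context. Then $G$ does not contain an induced subgraph isomorphic to $P_6$.
   Context: $P_n$ denotes the path on $n$ vertices. Let $\mathbb{F}=\mathbb{F}_2[\alpha]/(\alpha^4+\alpha+1)$ be the field with 16 elements. Let $S=\{x^3: x\in\mathbb{F}^\times\}=\{1,\alpha^3,\alpha^2+\alpha^3,\alpha+\alpha^3,1+\alpha+\alpha^2+\alpha^3\}$ be the set of nonzero cubes. Let $G$ be the graph with vertex set $\mathbb{F}$ in which distinct $x,y$ are adjacent if and only if $x-y\in S$. *)

theory Defs
  imports Main "HOL-Library.Z2" "HOL-Computational_Algebra.Polynomial"
begin

text \<open>The field F = F_2[alpha]/(alpha^4+alpha+1), represented by the reduced
  polynomials over F_2 (type bit) of degree < 4; arithmetic is polynomial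
  arithmetic followed by reduction modulo alpha^4+alpha+1.\<close>

definition gf_mod :: "bit poly" where
  "gf_mod = [:1, 1, 0, 0, 1:]"

definition gf16 :: "bit poly set" where
  "gf16 = {p. p = p mod gf_mod}"

definition gf_mult :: "bit poly \<Rightarrow> bit poly \<Rightarrow> bit poly" where
  "gf_mult p q = (p * q) mod gf_mod"

definition gf_sub :: "bit poly \<Rightarrow> bit poly \<Rightarrow> bit poly" where
  "gf_sub p q = (p - q) mod gf_mod"

definition cubes :: "bit poly set" where
  "cubes = {gf_mult x (gf_mult x x) | x. x \<in> gf16 \<and> x \<noteq> 0}"

definition G_adj :: "bit poly \<Rightarrow> bit poly \<Rightarrow> bool" where
  "G_adj x y \<longleftrightarrow> x \<noteq> y \<and> gf_sub x y \<in> cubes"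

definition has_induced_path :: "'a set \<Rightarrow> ('a \<Rightarrow> 'a \<Rightarrow> bool) \<Rightarrow> nat \<Rightarrow> bool" where
  "has_induced_path V E n \<longleftrightarrow>
     (\<exists>vs. length vs = n \<and> distinct vs \<and> set vs \<subseteq> V \<and>
        (\<forall>i<n. \<forall>j<n. E (vs ! i) (vs ! j) \<longleftrightarrow> (i = Suc j \<or> j = Suc i)))"

end

theory Submission
  imports Defs
begin
datatype V = V0 | V1 | V2 | V3 | V4 | V5 | V6 | V7 | V8 | V9 | V10 | V11 | V12 | V13 | V14 | V15
fun nb :: "V \<Rightarrow> V list" where
  "nb V0 = [V1, V8, V10, V12, V15]" |
  "nb V1 = [V0, V9, V11, V13, V14]" |
  "nb V2 = [V3, V10, V8, V14, V13]" |
  "nb V3 = [V2, V11, V9, V15, V12]" |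
  "nb V4 = [V5, V12, V14, V8, V11]" |
  "nb V5 = [V4, V13, V15, V9, V10]" |
  "nb V6 = [V7, V14, V12, V10, V9]" |
  "nb V7 = [V6, V15, V13, V11, V8]" |
  "nb V8 = [V9, V0, V2, V4, V7]" |
  "nb V9 = [V8, V1, V3, V5, V6]" |
  "nb V10 = [V11, V2, V0, V6, V5]" |
  "nb V11 = [V10, V3, V1, V7, V4]" |
  "nb V12 = [V13, V4, V6, V0, V3]" |
  "nb V13 = [V12, V5, V7, V1, V2]" |
  "nb V14 = [V15, V6, V4, V2, V1]" |
  "nb V15 = [V14, V7, V5, V3, V0]"
definition allV :: "V list" where "allV = [V0, V1, V2, V3, V4, V5, V6, V7, V8, V9, V10, V11, V12, V13, V14, V15]"
definition adj :: "V \<Rightarrow> V \<Rightarrow> bool" where "adj x y = (y \<in> set (nb x))"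


fun encV :: "V \<Rightarrow> bit poly" where
  "encV V0 = [:0, 0, 0, 0:]" |
  "encV V1 = [:1, 0, 0, 0:]" |
  "encV V2 = [:0, 1, 0, 0:]" |
  "encV V3 = [:1, 1, 0, 0:]" |
  "encV V4 = [:0, 0, 1, 0:]" |
  "encV V5 = [:1, 0, 1, 0:]" |
  "encV V6 = [:0, 1, 1, 0:]" |
  "encV V7 = [:1, 1, 1, 0:]" |
  "encV V8 = [:0, 0, 0, 1:]" |
  "encV V9 = [:1, 0, 0, 1:]" |
  "encV V10 = [:0, 1, 0, 1:]" |
  "encV V11 = [:1, 1, 0, 1:]" |
  "encV V12 = [:0, 0, 1, 1:]" |
  "encV V13 = [:1, 0, 1, 1:]" |
  "encV V14 = [:0, 1, 1, 1:]" |
  "encV V15 = [:1, 1, 1, 1:]"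

lemma deg_encV: "degree (encV x) < 4"
  by (cases x) (auto intro!: le_less_trans[OF degree_pCons_le])

lemma sub_eq: "gf_sub (encV x) (encV y) = encV x - encV y"
  unfolding gf_sub_def
  by (rule mod_poly_less) (use deg_encV[of x] deg_encV[of y] degree_diff_le_max[of "encV x" "encV y"] in \<open>auto simp: gf_mod_def\<close>)

lemma encV_inj: "encV x = encV y \<longleftrightarrow> x = y"
  by (cases x; cases y; simp)

lemma diff_tab: "encV x - encV y \<in> encV ` {V1, V8, V10, V12, V15} \<longleftrightarrow> adj x y"
  unfolding adj_def by (cases x; cases y; simp)

lemma bit01: "(b::bit) = 0 \<or> b = 1" by auto

lemma gf16_sub: "p \<in> gf16 \<Longrightarrow> p \<in> range encV"
proof -
  assume "p \<in> gf16"
  hence pe: "p = p mod gf_mod" by (simp add: gf16_def)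
  have g0: "gf_mod \<noteq> 0" and g4: "degree gf_mod = 4" by (simp_all add: gf_mod_def)
  have "degree p < 4"
  proof (cases "p = 0")
    case False
    with degree_mod_less[OF g0, of p] pe g4 show ?thesis by auto
  qed simp
  hence peq: "p = [:coeff p 0, coeff p 1, coeff p 2, coeff p 3:]"
    by (intro poly_eqI) (auto simp: coeff_pCons coeff_eq_0 eval_nat_numeral split: nat.splits)
  show ?thesis
    using bit01[of "coeff p 0"] bit01[of "coeff p 1"] bit01[of "coeff p 2"] bit01[of "coeff p 3"]
    apply (subst peq)
    apply (elim disjE)
    by (simp_all add: image_iff,
        (rule exI[where x=V0] exI[where x=V1] exI[where x=V2] exI[where x=V3]
         exI[where x=V4] exI[where x=V5] exI[where x=V6] exI[where x=V7]
         exI[where x=V8] exI[where x=V9] exI[where x=V10] exI[where x=V11]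
         exI[where x=V12] exI[where x=V13] exI[where x=V14] exI[where x=V15], simp)+)
qed

lemma gf16_eq: "gf16 = range encV"
proof -
  have "encV x mod gf_mod = encV x" for x
    by (rule mod_poly_less) (use deg_encV[of x] in \<open>simp add: gf_mod_def\<close>)
  then show ?thesis using gf16_sub by (auto simp: gf16_def)
qed

lemma cube_vals: "map (\<lambda>x. gf_mult (encV x) (gf_mult (encV x) (encV x))) [V1, V2, V3, V4, V5, V6, V7, V8, V9, V10, V11, V12, V13, V14, V15]
  = map encV [V1, V8, V15, V12, V10, V1, V1, V10, V15, V15, V12, V8, V10, V8, V12]"
  unfolding gf_mult_def gf_mod_def by code_simp

lemma cubes_eq: "cubes = encV ` {V1, V8, V10, V12, V15}"
proof -
  have "cubes = (\<lambda>x. gf_mult (encV x) (gf_mult (encV x) (encV x))) ` {x. encV x \<noteq> 0}"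
    unfolding cubes_def gf16_eq by auto
  also have "{x. encV x \<noteq> 0} = set [V1, V2, V3, V4, V5, V6, V7, V8, V9, V10, V11, V12, V13, V14, V15]"
  proof -
    have "encV x \<noteq> 0 \<longleftrightarrow> x \<in> set [V1, V2, V3, V4, V5, V6, V7, V8, V9, V10, V11, V12, V13, V14, V15]" for x
      by (cases x) simp_all
    then show ?thesis by blast
  qed
  also have "(\<lambda>x. gf_mult (encV x) (gf_mult (encV x) (encV x))) ` \<dots> = encV ` {V1, V8, V10, V12, V15}"
    using arg_cong[OF cube_vals, of set] by (simp only: set_map) auto
  finally show ?thesis .
qed

lemma adj_iff: "G_adj (encV x) (encV y) \<longleftrightarrow> adj x y"
proof -
  have "\<not> adj x x" by (cases x) (simp_all add: adj_def)
  then show ?thesis unfolding G_adj_def sub_eq cubes_eq diff_tab encV_inj by auto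
qed

lemma chk: "list_all (\<lambda>a. list_all (\<lambda>b. list_all (\<lambda>c.
   c \<noteq> a \<and> \<not> adj a c \<longrightarrow> list_all (\<lambda>d.
   d \<noteq> a \<and> d \<noteq> b \<and> \<not> adj a d \<and> \<not> adj b d \<longrightarrow> list_all (\<lambda>e.
   e \<noteq> a \<and> e \<noteq> b \<and> e \<noteq> c \<and> \<not> adj a e \<and> \<not> adj b e \<and> \<not> adj c e \<longrightarrow>
   list_all (\<lambda>f. f = a \<or> f = b \<or> f = c \<or> f = d \<or>
      adj a f \<or> adj b f \<or> adj c f \<or> adj d f) (nb e)) (nb d)) (nb c)) (nb b)) (nb a)) allV"
  unfolding allV_def by code_simp

lemma chk': "\<lbrakk>adj a b; adj b c; adj c d; adj d e; adj e f;
   \<not> adj a c; \<not> adj a d; \<not> adj b d; \<not> adj a e; \<not> adj b e; \<not> adj c e;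
   \<not> adj a f; \<not> adj b f; \<not> adj c f; \<not> adj d f;
   distinct [a, b, c, d, e, f]\<rbrakk> \<Longrightarrow> False"
proof -
  assume as: "adj a b" "adj b c" "adj c d" "adj d e" "adj e f"
   "\<not> adj a c" "\<not> adj a d" "\<not> adj b d" "\<not> adj a e" "\<not> adj b e" "\<not> adj c e"
   "\<not> adj a f" "\<not> adj b f" "\<not> adj c f" "\<not> adj d f" "distinct [a, b, c, d, e, f]"
  have all: "set allV = UNIV" unfolding allV_def by (auto intro: V.exhaust)
  have adjn: "adj x y \<longleftrightarrow> y \<in> set (nb x)" for x y by (simp add: adj_def)
  from chk have "\<forall>a. \<forall>b\<in>set (nb a). \<forall>c\<in>set (nb b).
   c \<noteq> a \<and> \<not> adj a c \<longrightarrow> (\<forall>d\<in>set (nb c).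
   d \<noteq> a \<and> d \<noteq> b \<and> \<not> adj a d \<and> \<not> adj b d \<longrightarrow> (\<forall>e\<in>set (nb d).
   e \<noteq> a \<and> e \<noteq> b \<and> e \<noteq> c \<and> \<not> adj a e \<and> \<not> adj b e \<and> \<not> adj c e \<longrightarrow>
   (\<forall>f\<in>set (nb e). f = a \<or> f = b \<or> f = c \<or> f = d \<or>
      adj a f \<or> adj b f \<or> adj c f \<or> adj d f)))"
    by (simp only: list_all_iff all) blast
  note Z = this[rule_format]
  have "f = a \<or> f = b \<or> f = c \<or> f = d \<or> adj a f \<or> adj b f \<or> adj c f \<or> adj d f"
    by (rule Z) (use as in \<open>auto simp: adjn[symmetric]\<close>)
  then show False using as by auto
qed

theorem claim1:
  shows "\<not> has_induced_path gf16 G_adj 6"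
proof
  assume "has_induced_path gf16 G_adj 6"
  then obtain vs where len: "length vs = 6" and dis: "distinct vs" and sub: "set vs \<subseteq> gf16"
    and E: "\<forall>i<6. \<forall>j<6. G_adj (vs ! i) (vs ! j) \<longleftrightarrow> (i = Suc j \<or> j = Suc i)"
    unfolding has_induced_path_def by blast
  define ws where "ws = map (inv encV) vs"
  have vw: "vs = map encV ws"
    unfolding ws_def using sub gf16_eq by (auto simp: map_idI f_inv_into_f intro!: map_idI[symmetric])
  have "length ws = 6" using len ws_def by simp
  then obtain a b c d e f where w: "ws = [a, b, c, d, e, f]"
    by (auto simp: numeral_eq_Suc length_Suc_conv)
  have dw: "distinct [a, b, c, d, e, f]" using dis vw w by (simp add: encV_inj)
  have h0: "adj (ws ! i) (ws ! j) \<longleftrightarrow> (i = Suc j \<or> j = Suc i)"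
    if "i < 6" "j < 6" for i j
  proof -
    have "vs ! i = encV (ws ! i)" "vs ! j = encV (ws ! j)"
      using that \<open>length ws = 6\<close> vw by simp_all
    then show ?thesis using E[rule_format, OF that] by (simp add: adj_iff)
  qed
  have h: "adj ([a, b, c, d, e, f] ! i) ([a, b, c, d, e, f] ! j) \<longleftrightarrow> (i = Suc j \<or> j = Suc i)"
    if "i < 6" "j < 6" for i j using h0[OF that] w by simp
  show False
    apply (rule chk'[OF _ _ _ _ _ _ _ _ _ _ _ _ _ _ _ dw])
    using h[of 0 1] h[of 1 2] h[of 2 3] h[of 3 4] h[of 4 5] h[of 0 2] h[of 0 3] h[of 1 3]
      h[of 0 4] h[of 1 4] h[of 2 4] h[of 0 5] h[of 1 5] h[of 2 5] h[of 3 5]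
    by simp_all
qed

end
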